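(* Let $z_1,\ldots,z_N$ be distinct points on the unit circle in $\mathbb{C}$. Then there exists $p_0\in\{1,\ldots,N\}$ such that $$\prod_{q\ne p_0}|z_{p_0}-z_q|\le N.$$ *)

theory Defs
  imports "HOL-Analysis.Analysis"
begin

end

theory Submission
  imports Defs "HOL-Computational_Algebra.Polynomial"
begin

lemma lagrange_key:
  fixes A :: "nat set" and z :: "nat \<Rightarrow> complex"
  assumes fin: "finite A" and ne: "A \<noteq> {}" and inj: "inj_on z A"
  shows "(\<Sum>p\<in>A. z p ^ (card A - 1) / (\<Prod>q\<in>A - {p}. (z p - z q))) = 1"
proof -
  define n where "n = card A"
  define P where "P p = (\<Prod>q\<in>A - {p}. [:- z q, 1:])" for p
  define D where "D p = (\<Prod>q\<in>A - {p}. (z p - z q))" for p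
  define L where "L = (\<Sum>p\<in>A. smult (z p ^ (n - 1) / D p) (P p))"
  have n1: "n \<ge> 1" using fin ne by (simp add: n_def Suc_le_eq card_gt_0_iff)
  have degP: "degree (P p) = n - 1" if "p \<in> A" for p
  proof -
    have "degree (P p) = (\<Sum>q\<in>A - {p}. degree [:- z q, 1:])"
      unfolding P_def by (rule degree_prod_eq_sum_degree) auto
    also have "\<dots> = card (A - {p})" by simp
    also have "\<dots> = n - 1" using that fin by (simp add: n_def)
    finally show ?thesis .
  qed
  have lcP: "lead_coeff (P p) = 1" for p
    unfolding P_def by (simp add: lead_coeff_prod)
  have coeffP: "coeff (P p) (n - 1) = 1" if "p \<in> A" for p
    using lcP[of p] degP[OF that] by simp
  have polyP: "poly (P p) x = (\<Prod>q\<in>A - {p}. (x - z q))" for p x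
    unfolding P_def by (simp add: poly_prod)
  have D0: "D p \<noteq> 0" if "p \<in> A" for p
    unfolding D_def using fin inj that by (auto simp: inj_on_def)
  have polyL: "poly L (z r) = poly (monom 1 (n - 1)) (z r)" if r: "r \<in> A" for r
  proof -
    have "poly L (z r) = (\<Sum>p\<in>A. (z p ^ (n - 1) / D p) * poly (P p) (z r))"
      unfolding L_def by (simp add: poly_sum)
    also have "\<dots> = (z r ^ (n - 1) / D r) * poly (P r) (z r)"
    proof (rule sum.remove[OF fin r, THEN trans])
      have "(\<Sum>p\<in>A - {r}. (z p ^ (n - 1) / D p) * poly (P p) (z r)) = 0"
      proof (rule sum.neutral, intro ballI)
        fix p assume p: "p \<in> A - {r}"
        have "poly (P p) (z r) = 0" unfolding polyP
          using fin p r by (intro prod_zero) auto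
        thus "(z p ^ (n - 1) / D p) * poly (P p) (z r) = 0" by simp
      qed
      thus "z r ^ (n - 1) / D r * poly (P r) (z r) +
          (\<Sum>p\<in>A - {r}. (z p ^ (n - 1) / D p) * poly (P p) (z r)) =
          (z r ^ (n - 1) / D r) * poly (P r) (z r)" by simp
    qed
    also have "poly (P r) (z r) = D r" unfolding polyP D_def by simp
    also have "(z r ^ (n - 1) / D r) * D r = z r ^ (n - 1)" using D0[OF r] by simp
    finally show ?thesis by (simp add: poly_monom)
  qed
  have degL: "degree L \<le> n - 1"
    unfolding L_def
    by (rule degree_sum_le) (use fin degP in \<open>auto intro: order.trans[OF degree_smult_le]\<close>)
  have "L = monom 1 (n - 1)"
  proof (rule poly_eqI_degree[of "z ` A"])
    show "\<And>x. x \<in> z ` A \<Longrightarrow> poly L x = poly (monom 1 (n - 1)) x" using polyL by auto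
    show "degree L < card (z ` A)" using degL n1 card_image[OF inj] by (simp add: n_def)
    show "degree (monom (1::complex) (n - 1)) < card (z ` A)"
      using n1 card_image[OF inj] by (simp add: n_def degree_monom_eq)
  qed
  hence "coeff L (n - 1) = 1" by simp
  moreover have "coeff L (n - 1) = (\<Sum>p\<in>A. z p ^ (n - 1) / D p)"
    unfolding L_def by (simp add: coeff_sum) (rule sum.cong, simp_all add: coeffP[simplified])
  ultimately show ?thesis by (simp add: D_def n_def)
qed

theorem mainTheorem8:
  fixes N :: nat and z :: "nat \<Rightarrow> complex"
  assumes "N \<ge> 1"
    and "\<And>p. p \<in> {1..N} \<Longrightarrow> norm (z p) = 1"
    and "inj_on z {1..N}"
  shows "\<exists>p0\<in>{1..N}. (\<Prod>q\<in>{1..N} - {p0}. norm (z p0 - z q)) \<le> real N"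
proof (rule ccontr)
  assume H: "\<not> ?thesis"
  let ?A = "{1..N::nat}"
  let ?D = "\<lambda>p. (\<Prod>q\<in>?A - {p}. (z p - z q))"
  have big: "norm (?D p) > real N" if "p \<in> ?A" for p
    using H that by (auto simp: prod_norm not_le)
  have key: "(\<Sum>p\<in>?A. z p ^ (card ?A - 1) / ?D p) = 1"
    by (rule lagrange_key) (use assms in auto)
  have "1 = norm (\<Sum>p\<in>?A. z p ^ (card ?A - 1) / ?D p)" by (subst key) simp
  also have "\<dots> \<le> (\<Sum>p\<in>?A. norm (z p ^ (card ?A - 1) / ?D p))" by (rule norm_sum)
  also have "\<dots> = (\<Sum>p\<in>?A. 1 / norm (?D p))"
    by (rule sum.cong) (auto simp: norm_divide norm_power assms(2))
  also have "\<dots> < (\<Sum>p\<in>?A. 1 / real N)"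
  proof (rule sum_strict_mono)
    show "finite ?A" by simp
    show "?A \<noteq> {}" using assms by auto
    fix p assume "p \<in> ?A"
    hence b: "norm (?D p) > real N" by (rule big)
    have "real N > 0" using assms(1) by simp
    have gen: "1 / x < 1 / y" if "0 < y" "y < x" for x y :: real
      using that by (simp add: frac_less2)
    show "1 / norm (?D p) < 1 / real N" by (rule gen) fact+
  qed
  also have "\<dots> = 1" using assms(1) by simp
  finally show False by simp
qed

end
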